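(* Let $\varphi:=\frac{16}{3}\mathbb{1}-2\sqrt5 f_{24}$ and $\widetilde\varphi(t):=\varphi(-t)$ on $\mathbb{Z}/24\mathbb{Z}$, and for $a:\mathbb{Z}/24\mathbb{Z}\to[0,\infty)$ let $\mathcal N(a):=\max(9\|a\|_\infty,\|a\|_1)$. Then for every $a:\mathbb{Z}/24\mathbb{Z}\to[0,\infty)$, $$\mathcal N\big((a*\varphi)_+\big)\le2\mathcal N(a)\quad\text{and}\quad \mathcal N\big((a*\widetilde\varphi)_+\big)\le2\mathcal N(a).$$
   Context: $\mathbb{1}$ is the constant function $1$ on $\mathbb{Z}/24\mathbb{Z}$; $f_{24}(t):=\#\{j\in\mathbb{Z}/24\mathbb{Z}:j^2\equiv t\ (\mathrm{mod}\ 24)\}$; $(a*\psi)(t):=\frac1{24}\sum_{j\in\mathbb{Z}/24\mathbb{Z}}a(j)\psi(t-j)$; $x_+:=\max(x,0)$ pointwise; $\|h\|_\infty:=\max_t|h(t)|$, $\|h\|_1:=\sum_t|h(t)|$. *)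

theory Defs
  imports "HOL-Analysis.Analysis" "HOL-Library.Numeral_Type"
begin

definition f24 :: "24 \<Rightarrow> real" where
  "f24 t = real (card {j :: 24. j ^ 2 = t})"

definition conv24 :: "(24 \<Rightarrow> real) \<Rightarrow> (24 \<Rightarrow> real) \<Rightarrow> 24 \<Rightarrow> real" where
  "conv24 a psi t = (1 / 24) * (\<Sum>j\<in>UNIV. a j * psi (t - j))"

definition pospart :: "(24 \<Rightarrow> real) \<Rightarrow> 24 \<Rightarrow> real" where
  "pospart h t = max (h t) 0"

definition sup_norm24 :: "(24 \<Rightarrow> real) \<Rightarrow> real" where
  "sup_norm24 h = Max (range (\<lambda>t. \<bar>h t\<bar>))"

definition l1_norm24 :: "(24 \<Rightarrow> real) \<Rightarrow> real" where
  "l1_norm24 h = (\<Sum>t\<in>UNIV. \<bar>h t\<bar>)"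

definition NN :: "(24 \<Rightarrow> real) \<Rightarrow> real" where
  "NN a = max (9 * sup_norm24 a) (l1_norm24 a)"

definition phi24 :: "24 \<Rightarrow> real" where
  "phi24 t = 16 / 3 - 2 * sqrt 5 * f24 t"

definition phi24_tilde :: "24 \<Rightarrow> real" where
  "phi24_tilde t = phi24 (- t)"

end

theory Submission
  imports Defs
begin

definition F24 :: "nat \<Rightarrow> nat" where
 "F24 c = (if c = 0 then 2 else if c = 1 then 8 else if c = 4 then 4 else if c = 9 then 4 else if c = 12 then 2 else if c = 16 then 4 else 0)"

definition Nf :: "(nat \<Rightarrow> bool) \<Rightarrow> nat \<Rightarrow> nat" where
 "Nf b i = (\<Sum>k<24. of_bool (b k) * F24 ((i + 24 - k) mod 24))"

definition rhoT0 :: "int list list" where "rhoT0 = [[0, 0, 0, 0], [0, 0, 0, 0], [0, 0, 0, 0], [0, 0, 0, 0], [0, 0, 0, 0], [0, 0, 0, 0], [0, 0, 0, 0]]"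
definition DT0 :: "int list list" where "DT0 = [[0, 0, 0, 0, 0, 0, 0], [0, 0, 0, 0, 0, 0, 0], [0, 0, 0, 0, 0, 0, 0], [0, 0, 0, 0, 0, 0, 0], [0, 0, 0, 0, 0, 0, 0], [0, 0, 0, 0, 0, 0, 0], [0, 0, 0, 0, 0, 0, 0]]"
definition rhoT1 :: "int list list" where "rhoT1 = [[240, 80, 0, 0], [80, 80, 0, 0], [80, 80, 0, 0], [0, 0, 0, 0], [0, 0, 0, 0], [0, 0, 0, 0], [0, 0, 0, 0]]"
definition DT1 :: "int list list" where "DT1 = [[480, 320, 240, 240, 80, 0, 0], [160, 160, 160, 80, 80, 0, 0], [160, 160, 160, 80, 80, 0, 0], [0, 0, 0, 0, 0, 0, 0], [0, 0, 0, 0, 0, 0, 0], [0, 0, 0, 0, 0, 0, 0], [0, 0, 0, 0, 0, 0, 0]]"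
definition rhoT2 :: "int list list" where "rhoT2 = [[480, 160, 0, 0], [188, 160, 0, 0], [160, 160, 0, 0], [28, 28, 0, 0], [0, 0, 0, 0], [0, 0, 0, 0], [0, 0, 0, 0]]"
definition DT2 :: "int list list" where "DT2 = [[960, 640, 480, 480, 160, 0, 0], [376, 348, 320, 188, 160, 0, 0], [320, 320, 320, 160, 160, 0, 0], [56, 56, 56, 28, 28, 0, 0], [0, 0, 0, 0, 0, 0, 0], [0, 0, 0, 0, 0, 0, 0], [0, 0, 0, 0, 0, 0, 0]]"
definition rhoT3 :: "int list list" where "rhoT3 = [[720, 240, 0, 0], [348, 240, 0, 0], [240, 240, 0, 0], [108, 108, 0, 0], [0, 0, 0, 0], [0, 0, 0, 0], [0, 0, 0, 0]]"
definition DT3 :: "int list list" where "DT3 = [[1440, 960, 720, 720, 240, 0, 0], [696, 588, 480, 348, 240, 0, 0], [480, 480, 480, 240, 240, 0, 0], [216, 216, 216, 108, 108, 0, 0], [0, 0, 0, 0, 0, 0, 0], [0, 0, 0, 0, 0, 0, 0], [0, 0, 0, 0, 0, 0, 0]]"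
definition rhoT4 :: "int list list" where "rhoT4 = [[960, 376, 56, 0], [564, 320, 56, 0], [376, 320, 56, 0], [188, 188, 0, 0], [56, 56, 0, 0], [0, 0, 0, 0], [0, 0, 0, 0]]"
definition DT4 :: "int list list" where "DT4 = [[1920, 1336, 1016, 960, 376, 56, 0], [1128, 884, 640, 564, 320, 56, 0], [752, 696, 640, 376, 320, 56, 0], [376, 376, 376, 188, 188, 0, 0], [112, 112, 112, 56, 56, 0, 0], [0, 0, 0, 0, 0, 0, 0], [0, 0, 0, 0, 0, 0, 0]]"
definition rhoT5 :: "int list list" where "rhoT5 = [[1200, 536, 136, 0], [804, 404, 136, 0], [536, 400, 136, 0], [272, 268, 4, 0], [136, 136, 0, 0], [0, 0, 0, 0], [0, 0, 0, 0]]"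
definition DT5 :: "int list list" where "DT5 = [[2400, 1736, 1336, 1200, 536, 136, 0], [1608, 1208, 940, 804, 404, 136, 0], [1072, 936, 800, 536, 400, 136, 0], [544, 540, 536, 272, 268, 4, 0], [272, 272, 272, 136, 136, 0, 0], [0, 0, 0, 0, 0, 0, 0], [0, 0, 0, 0, 0, 0, 0]]"
definition rhoT6 :: "int list list" where "rhoT6 = [[1440, 696, 216, 0], [1044, 564, 216, 0], [696, 480, 216, 0], [432, 348, 84, 0], [216, 216, 0, 0], [0, 0, 0, 0], [0, 0, 0, 0]]"
definition DT6 :: "int list list" where "DT6 = [[2880, 2136, 1656, 1440, 696, 216, 0], [2088, 1608, 1260, 1044, 564, 216, 0], [1392, 1176, 960, 696, 480, 216, 0], [864, 780, 696, 432, 348, 84, 0], [432, 432, 432, 216, 216, 0, 0], [0, 0, 0, 0, 0, 0, 0], [0, 0, 0, 0, 0, 0, 0]]"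
definition rhoT7 :: "int list list" where "rhoT7 = [[1680, 888, 328, 0], [1284, 724, 296, 0], [888, 592, 296, 0], [592, 428, 164, 0], [328, 296, 32, 0], [32, 32, 0, 0], [0, 0, 0, 0]]"
definition DT7 :: "int list list" where "DT7 = [[3360, 2568, 2008, 1680, 888, 328, 0], [2568, 2008, 1580, 1284, 724, 296, 0], [1776, 1480, 1184, 888, 592, 296, 0], [1184, 1020, 856, 592, 428, 164, 0], [656, 624, 592, 328, 296, 32, 0], [64, 64, 64, 32, 32, 0, 0], [0, 0, 0, 0, 0, 0, 0]]"
definition rhoT8 :: "int list list" where "rhoT8 = [[1920, 1128, 488, 0], [1524, 884, 376, 0], [1128, 752, 376, 0], [752, 508, 244, 0], [488, 376, 112, 0], [112, 112, 0, 0], [0, 0, 0, 0]]"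
definition DT8 :: "int list list" where "DT8 = [[3840, 3048, 2408, 1920, 1128, 488, 0], [3048, 2408, 1900, 1524, 884, 376, 0], [2256, 1880, 1504, 1128, 752, 376, 0], [1504, 1260, 1016, 752, 508, 244, 0], [976, 864, 752, 488, 376, 112, 0], [224, 224, 224, 112, 112, 0, 0], [0, 0, 0, 0, 0, 0, 0]]"
definition rhoT9 :: "int list list" where "rhoT9 = [[2160, 1368, 648, 0], [1764, 1044, 516, 0], [1368, 912, 456, 0], [972, 648, 324, 0], [648, 456, 192, 0], [252, 192, 0, 0], [0, 0, 0, 0]]"
definition DT9 :: "int list list" where "DT9 = [[4320, 3528, 2808, 2160, 1368, 648, 0], [3528, 2808, 2280, 1764, 1044, 516, 0], [2736, 2280, 1824, 1368, 912, 456, 0], [1944, 1620, 1296, 972, 648, 324, 0], [1296, 1104, 912, 648, 456, 192, 0], [504, 444, 384, 252, 192, 0, 0], [0, 0, 0, 0, 0, 0, 0]]"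
definition rhoL :: "nat \<Rightarrow> int list list" where "rhoL l = (if l = 0 then rhoT0 else if l = 1 then rhoT1 else if l = 2 then rhoT2 else if l = 3 then rhoT3 else if l = 4 then rhoT4 else if l = 5 then rhoT5 else if l = 6 then rhoT6 else if l = 7 then rhoT7 else if l = 8 then rhoT8 else rhoT9)"
definition DL :: "nat \<Rightarrow> int list list" where "DL l = (if l = 0 then DT0 else if l = 1 then DT1 else if l = 2 then DT2 else if l = 3 then DT3 else if l = 4 then DT4 else if l = 5 then DT5 else if l = 6 then DT6 else if l = 7 then DT7 else if l = 8 then DT8 else DT9)"
definition rhoF :: "nat \<Rightarrow> nat \<Rightarrow> nat \<Rightarrow> int" where "rhoF p a l = rhoL l ! p ! a"
definition DF :: "nat \<Rightarrow> nat \<Rightarrow> nat \<Rightarrow> int" where "DF p q l = DL l ! p ! q"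
lemmas tab_defs = rhoF_def DF_def rhoL_def DL_def rhoT0_def DT0_def rhoT1_def DT1_def rhoT2_def DT2_def rhoT3_def DT3_def rhoT4_def DT4_def rhoT5_def DT5_def rhoT6_def DT6_def rhoT7_def DT7_def rhoT8_def DT8_def rhoT9_def DT9_def

definition Gp :: "nat \<Rightarrow> nat \<Rightarrow> nat \<Rightarrow> nat \<Rightarrow> nat \<Rightarrow> nat \<Rightarrow> nat \<Rightarrow> int" where
"Gp sv0 sv1 sv2 x0 x1 x2 l = max (80* int l - 66* int(2* sv0 + 4* sv2 + 4* x0 + 8* x2)) 0 + max (80* int l - 66* int(2* sv1 + 4* sv0 + 4* x1 + 8* x0)) 0 + max (80* int l - 66* int(2* sv2 + 4* sv1 + 4* x2 + 8* x1)) 0"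

lemma le1: "(s::nat) \<le> 1 \<Longrightarrow> s = 0 \<or> s = 1" by auto
lemma le2: "(s::nat) \<le> 2 \<Longrightarrow> s = 0 \<or> s = 1 \<or> s = 2" by auto
lemma le3: "(s::nat) \<le> 3 \<Longrightarrow> s = 0 \<or> s = 1 \<or> s = 2 \<or> s = 3" by auto
lemma le6: "(s::nat) \<le> 6 \<Longrightarrow> s = 0 \<or> s = 1 \<or> s = 2 \<or> s = 3 \<or> s = 4 \<or> s = 5 \<or> s = 6" by auto
lemma le9: "(s::nat) \<le> 9 \<Longrightarrow> s = 0 \<or> s = 1 \<or> s = 2 \<or> s = 3 \<or> s = 4 \<or> s = 5 \<or> s = 6 \<or> s = 7 \<or> s = 8 \<or> s = 9" by auto

lemma L1: "sv0 \<le> 2 \<Longrightarrow> sv1 \<le> 2 \<Longrightarrow> sv2 \<le> 2 \<Longrightarrow> x0 \<le> 1 \<Longrightarrow> x1 \<le> 1 \<Longrightarrow> x2 \<le> 1 \<Longrightarrow> l \<le> 9 \<Longrightarrow> Gp sv0 sv1 sv2 x0 x1 x2 l \<le> rhoF (sv0+sv1+sv2) (x0+x1+x2) l"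
  apply (drule le2)+ apply (drule le1)+ apply (drule le9)
  apply (elim disjE)
  apply (simp_all add: Gp_def tab_defs)
  done

lemma L2: "p \<le> 6 \<Longrightarrow> a \<le> 3 \<Longrightarrow> c \<le> 3 \<Longrightarrow> l \<le> 9 \<Longrightarrow> rhoF p a l + rhoF p c l \<le> DF p (a+c) l"
  apply (drule le6) apply (drule le3)+ apply (drule le9)
  apply (elim disjE)
  apply (simp_all add: tab_defs)
  done

lemma L3: "m0 \<le> 6 \<Longrightarrow> m1 \<le> 6 \<Longrightarrow> m2 \<le> 6 \<Longrightarrow> m3 \<le> 6 \<Longrightarrow> m0+m1+m2+m3 \<le> 9 \<Longrightarrow>
   DF m0 m3 (m0+m1+m2+m3) + DF m1 m0 (m0+m1+m2+m3) + DF m2 m1 (m0+m1+m2+m3) + DF m3 m2 (m0+m1+m2+m3) \<le> 6480"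
  apply (drule le6)+
  apply (elim disjE)
  apply (simp_all add: tab_defs)
  done

lemma pair_bound:
  fixes sv0 sv1 sv2 x0 x1 x2 y0 y1 y2 :: nat
  assumes "sv0 \<le> 2" "sv1 \<le> 2" "sv2 \<le> 2" "x0 \<le> 1" "x1 \<le> 1" "x2 \<le> 1" "y0 \<le> 1" "y1 \<le> 1" "y2 \<le> 1" "l \<le> 9"
  shows "Gp sv0 sv1 sv2 x0 x1 x2 l + Gp sv0 sv1 sv2 y0 y1 y2 l \<le> DF (sv0+sv1+sv2) (x0+x1+x2+(y0+y1+y2)) l"
proof -
  have "Gp sv0 sv1 sv2 x0 x1 x2 l + Gp sv0 sv1 sv2 y0 y1 y2 l \<le> rhoF (sv0+sv1+sv2) (x0+x1+x2) l + rhoF (sv0+sv1+sv2) (y0+y1+y2) l"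
    using L1[of sv0 sv1 sv2 x0 x1 x2 l] L1[of sv0 sv1 sv2 y0 y1 y2 l] assms by linarith
  also have "\<dots> \<le> DF (sv0+sv1+sv2) (x0+x1+x2+(y0+y1+y2)) l"
    by (rule L2) (use assms in auto)
  finally show ?thesis .
qed

lemma sum24_expand: "(\<Sum>k<(24::nat). g k) = g 23 + g 22 + g 21 + g 20 + g 19 + g 18 + g 17 + g 16 + g 15 + g 14 + g 13 + g 12 + g 11 + g 10 + g 9 + g 8 + g 7 + g 6 + g 5 + g 4 + g 3 + g 2 + g 1 + g 0"
  by (simp add: lessThan_nat_numeral add.assoc)

lemma Nf_0: "Nf b 0 = 2* (of_bool (b 0) + of_bool (b 12)) + 4* (of_bool (b 8) + of_bool (b 20)) + 4* (of_bool (b 15)) + 8* (of_bool (b 23))"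
  unfolding Nf_def sum24_expand by (simp add: F24_def)

lemma Nf_16: "Nf b 16 = 2* (of_bool (b 16) + of_bool (b 4)) + 4* (of_bool (b 0) + of_bool (b 12)) + 4* (of_bool (b 7)) + 8* (of_bool (b 15))"
  unfolding Nf_def sum24_expand by (simp add: F24_def)

lemma Nf_8: "Nf b 8 = 2* (of_bool (b 8) + of_bool (b 20)) + 4* (of_bool (b 16) + of_bool (b 4)) + 4* (of_bool (b 23)) + 8* (of_bool (b 7))"
  unfolding Nf_def sum24_expand by (simp add: F24_def)

lemma Nf_9: "Nf b 9 = 2* (of_bool (b 9) + of_bool (b 21)) + 4* (of_bool (b 17) + of_bool (b 5)) + 4* (of_bool (b 0)) + 8* (of_bool (b 8))"
  unfolding Nf_def sum24_expand by (simp add: F24_def)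

lemma Nf_1: "Nf b 1 = 2* (of_bool (b 1) + of_bool (b 13)) + 4* (of_bool (b 9) + of_bool (b 21)) + 4* (of_bool (b 16)) + 8* (of_bool (b 0))"
  unfolding Nf_def sum24_expand by (simp add: F24_def)

lemma Nf_17: "Nf b 17 = 2* (of_bool (b 17) + of_bool (b 5)) + 4* (of_bool (b 1) + of_bool (b 13)) + 4* (of_bool (b 8)) + 8* (of_bool (b 16))"
  unfolding Nf_def sum24_expand by (simp add: F24_def)

lemma Nf_18: "Nf b 18 = 2* (of_bool (b 18) + of_bool (b 6)) + 4* (of_bool (b 2) + of_bool (b 14)) + 4* (of_bool (b 9)) + 8* (of_bool (b 17))"
  unfolding Nf_def sum24_expand by (simp add: F24_def)

lemma Nf_10: "Nf b 10 = 2* (of_bool (b 10) + of_bool (b 22)) + 4* (of_bool (b 18) + of_bool (b 6)) + 4* (of_bool (b 1)) + 8* (of_bool (b 9))"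
  unfolding Nf_def sum24_expand by (simp add: F24_def)

lemma Nf_2: "Nf b 2 = 2* (of_bool (b 2) + of_bool (b 14)) + 4* (of_bool (b 10) + of_bool (b 22)) + 4* (of_bool (b 17)) + 8* (of_bool (b 1))"
  unfolding Nf_def sum24_expand by (simp add: F24_def)

lemma Nf_3: "Nf b 3 = 2* (of_bool (b 3) + of_bool (b 15)) + 4* (of_bool (b 11) + of_bool (b 23)) + 4* (of_bool (b 18)) + 8* (of_bool (b 2))"
  unfolding Nf_def sum24_expand by (simp add: F24_def)

lemma Nf_19: "Nf b 19 = 2* (of_bool (b 19) + of_bool (b 7)) + 4* (of_bool (b 3) + of_bool (b 15)) + 4* (of_bool (b 10)) + 8* (of_bool (b 18))"
  unfolding Nf_def sum24_expand by (simp add: F24_def)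

lemma Nf_11: "Nf b 11 = 2* (of_bool (b 11) + of_bool (b 23)) + 4* (of_bool (b 19) + of_bool (b 7)) + 4* (of_bool (b 2)) + 8* (of_bool (b 10))"
  unfolding Nf_def sum24_expand by (simp add: F24_def)

lemma Nf_12: "Nf b 12 = 2* (of_bool (b 0) + of_bool (b 12)) + 4* (of_bool (b 8) + of_bool (b 20)) + 4* (of_bool (b 3)) + 8* (of_bool (b 11))"
  unfolding Nf_def sum24_expand by (simp add: F24_def)

lemma Nf_4: "Nf b 4 = 2* (of_bool (b 16) + of_bool (b 4)) + 4* (of_bool (b 0) + of_bool (b 12)) + 4* (of_bool (b 19)) + 8* (of_bool (b 3))"
  unfolding Nf_def sum24_expand by (simp add: F24_def)

lemma Nf_20: "Nf b 20 = 2* (of_bool (b 8) + of_bool (b 20)) + 4* (of_bool (b 16) + of_bool (b 4)) + 4* (of_bool (b 11)) + 8* (of_bool (b 19))"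
  unfolding Nf_def sum24_expand by (simp add: F24_def)

lemma Nf_21: "Nf b 21 = 2* (of_bool (b 9) + of_bool (b 21)) + 4* (of_bool (b 17) + of_bool (b 5)) + 4* (of_bool (b 12)) + 8* (of_bool (b 20))"
  unfolding Nf_def sum24_expand by (simp add: F24_def)

lemma Nf_13: "Nf b 13 = 2* (of_bool (b 1) + of_bool (b 13)) + 4* (of_bool (b 9) + of_bool (b 21)) + 4* (of_bool (b 4)) + 8* (of_bool (b 12))"
  unfolding Nf_def sum24_expand by (simp add: F24_def)

lemma Nf_5: "Nf b 5 = 2* (of_bool (b 17) + of_bool (b 5)) + 4* (of_bool (b 1) + of_bool (b 13)) + 4* (of_bool (b 20)) + 8* (of_bool (b 4))"
  unfolding Nf_def sum24_expand by (simp add: F24_def)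

lemma Nf_6: "Nf b 6 = 2* (of_bool (b 18) + of_bool (b 6)) + 4* (of_bool (b 2) + of_bool (b 14)) + 4* (of_bool (b 21)) + 8* (of_bool (b 5))"
  unfolding Nf_def sum24_expand by (simp add: F24_def)

lemma Nf_22: "Nf b 22 = 2* (of_bool (b 10) + of_bool (b 22)) + 4* (of_bool (b 18) + of_bool (b 6)) + 4* (of_bool (b 13)) + 8* (of_bool (b 21))"
  unfolding Nf_def sum24_expand by (simp add: F24_def)

lemma Nf_14: "Nf b 14 = 2* (of_bool (b 2) + of_bool (b 14)) + 4* (of_bool (b 10) + of_bool (b 22)) + 4* (of_bool (b 5)) + 8* (of_bool (b 13))"
  unfolding Nf_def sum24_expand by (simp add: F24_def)

lemma Nf_15: "Nf b 15 = 2* (of_bool (b 3) + of_bool (b 15)) + 4* (of_bool (b 11) + of_bool (b 23)) + 4* (of_bool (b 6)) + 8* (of_bool (b 14))"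
  unfolding Nf_def sum24_expand by (simp add: F24_def)

lemma Nf_7: "Nf b 7 = 2* (of_bool (b 19) + of_bool (b 7)) + 4* (of_bool (b 3) + of_bool (b 15)) + 4* (of_bool (b 22)) + 8* (of_bool (b 6))"
  unfolding Nf_def sum24_expand by (simp add: F24_def)

lemma Nf_23: "Nf b 23 = 2* (of_bool (b 11) + of_bool (b 23)) + 4* (of_bool (b 19) + of_bool (b 7)) + 4* (of_bool (b 14)) + 8* (of_bool (b 22))"
  unfolding Nf_def sum24_expand by (simp add: F24_def)

lemmas Nf_facts = Nf_0 Nf_16 Nf_8 Nf_9 Nf_1 Nf_17 Nf_18 Nf_10 Nf_2 Nf_3 Nf_19 Nf_11 Nf_12 Nf_4 Nf_20 Nf_21 Nf_13 Nf_5 Nf_6 Nf_22 Nf_14 Nf_15 Nf_7 Nf_23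

lemma reorder24: "(\<Sum>k<(24::nat). g k) = (g 0 + g 16 + g 8 + (g 12 + g 4 + g 20)) + (g 9 + g 1 + g 17 + (g 21 + g 13 + g 5)) + (g 18 + g 10 + g 2 + (g 6 + g 22 + g 14)) + (g 3 + g 19 + g 11 + (g 15 + g 7 + g 23))"
  unfolding sum24_expand by (simp only: ac_simps)

lemma row_identity:
  "(\<Sum>i<24. max (80 * int l - 66 * int (Nf b i)) 0) = (Gp (of_bool (b 0) + of_bool (b 12)) (of_bool (b 16) + of_bool (b 4)) (of_bool (b 8) + of_bool (b 20)) (of_bool (b 15)) (of_bool (b 7)) (of_bool (b 23)) l + Gp (of_bool (b 0) + of_bool (b 12)) (of_bool (b 16) + of_bool (b 4)) (of_bool (b 8) + of_bool (b 20)) (of_bool (b 3)) (of_bool (b 19)) (of_bool (b 11)) l) + (Gp (of_bool (b 9) + of_bool (b 21)) (of_bool (b 1) + of_bool (b 13)) (of_bool (b 17) + of_bool (b 5)) (of_bool (b 0)) (of_bool (b 16)) (of_bool (b 8)) l + Gp (of_bool (b 9) + of_bool (b 21)) (of_bool (b 1) + of_bool (b 13)) (of_bool (b 17) + of_bool (b 5)) (of_bool (b 12)) (of_bool (b 4)) (of_bool (b 20)) l) + (Gp (of_bool (b 18) + of_bool (b 6)) (of_bool (b 10) + of_bool (b 22)) (of_bool (b 2) + of_bool (b 14)) (of_bool (b 9)) (of_bool (b 1)) (of_bool (b 17)) l + Gp (of_bool (b 18) + of_bool (b 6)) (of_bool (b 10) + of_bool (b 22)) (of_bool (b 2) + of_bool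 (b 14)) (of_bool (b 21)) (of_bool (b 13)) (of_bool (b 5)) l) + (Gp (of_bool (b 3) + of_bool (b 15)) (of_bool (b 19) + of_bool (b 7)) (of_bool (b 11) + of_bool (b 23)) (of_bool (b 18)) (of_bool (b 10)) (of_bool (b 2)) l + Gp (of_bool (b 3) + of_bool (b 15)) (of_bool (b 19) + of_bool (b 7)) (of_bool (b 11) + of_bool (b 23)) (of_bool (b 6)) (of_bool (b 22)) (of_bool (b 14)) l)"
  unfolding reorder24[of "\<lambda>i. max (80 * int l - 66 * int (Nf b i)) 0"] Nf_facts Gp_def ..

lemma vertex_nat:
  fixes b :: "nat \<Rightarrow> bool"
  assumes l9: "(\<Sum>k<24. of_bool (b k) :: nat) \<le> 9"
  shows "(\<Sum>i<24. max (80 * int (\<Sum>k<24. of_bool (b k)) - 66 * int (Nf b i)) 0) \<le> 6480"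
proof -
  define l where "l = (\<Sum>k<24. of_bool (b k) :: nat)"
  define m0 where "m0 = ((of_bool (b 0) + of_bool (b 12)) + (of_bool (b 16) + of_bool (b 4)) + (of_bool (b 8) + of_bool (b 20)) :: nat)"
  define m1 where "m1 = ((of_bool (b 9) + of_bool (b 21)) + (of_bool (b 1) + of_bool (b 13)) + (of_bool (b 17) + of_bool (b 5)) :: nat)"
  define m2 where "m2 = ((of_bool (b 18) + of_bool (b 6)) + (of_bool (b 10) + of_bool (b 22)) + (of_bool (b 2) + of_bool (b 14)) :: nat)"
  define m3 where "m3 = ((of_bool (b 3) + of_bool (b 15)) + (of_bool (b 19) + of_bool (b 7)) + (of_bool (b 11) + of_bool (b 23)) :: nat)"
  have leq: "l = m0 + m1 + m2 + m3"
    unfolding l_def m0_def m1_def m2_def m3_def sum24_expand by simp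
  have l9': "l \<le> 9" using l9 l_def by simp
  have mx0: "(of_bool (b 15)) + (of_bool (b 7)) + (of_bool (b 23)) + ((of_bool (b 3)) + (of_bool (b 19)) + (of_bool (b 11))) = m3" unfolding m3_def by simp
  have p0: "Gp (of_bool (b 0) + of_bool (b 12)) (of_bool (b 16) + of_bool (b 4)) (of_bool (b 8) + of_bool (b 20)) (of_bool (b 15)) (of_bool (b 7)) (of_bool (b 23)) l + Gp (of_bool (b 0) + of_bool (b 12)) (of_bool (b 16) + of_bool (b 4)) (of_bool (b 8) + of_bool (b 20)) (of_bool (b 3)) (of_bool (b 19)) (of_bool (b 11)) l \<le> DF m0 m3 l"
    using pair_bound[of "(of_bool (b 0) + of_bool (b 12))" "(of_bool (b 16) + of_bool (b 4))" "(of_bool (b 8) + of_bool (b 20))" "(of_bool (b 15))" "(of_bool (b 7))" "(of_bool (b 23))" "(of_bool (b 3))" "(of_bool (b 19))" "(of_bool (b 11))" l] l9' unfolding m0_def mx0[symmetric] by simp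
  have mx1: "(of_bool (b 0)) + (of_bool (b 16)) + (of_bool (b 8)) + ((of_bool (b 12)) + (of_bool (b 4)) + (of_bool (b 20))) = m0" unfolding m0_def by simp
  have p1: "Gp (of_bool (b 9) + of_bool (b 21)) (of_bool (b 1) + of_bool (b 13)) (of_bool (b 17) + of_bool (b 5)) (of_bool (b 0)) (of_bool (b 16)) (of_bool (b 8)) l + Gp (of_bool (b 9) + of_bool (b 21)) (of_bool (b 1) + of_bool (b 13)) (of_bool (b 17) + of_bool (b 5)) (of_bool (b 12)) (of_bool (b 4)) (of_bool (b 20)) l \<le> DF m1 m0 l"
    using pair_bound[of "(of_bool (b 9) + of_bool (b 21))" "(of_bool (b 1) + of_bool (b 13))" "(of_bool (b 17) + of_bool (b 5))" "(of_bool (b 0))" "(of_bool (b 16))" "(of_bool (b 8))" "(of_bool (b 12))" "(of_bool (b 4))" "(of_bool (b 20))" l] l9' unfolding m1_def mx1[symmetric] by simp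
  have mx2: "(of_bool (b 9)) + (of_bool (b 1)) + (of_bool (b 17)) + ((of_bool (b 21)) + (of_bool (b 13)) + (of_bool (b 5))) = m1" unfolding m1_def by simp
  have p2: "Gp (of_bool (b 18) + of_bool (b 6)) (of_bool (b 10) + of_bool (b 22)) (of_bool (b 2) + of_bool (b 14)) (of_bool (b 9)) (of_bool (b 1)) (of_bool (b 17)) l + Gp (of_bool (b 18) + of_bool (b 6)) (of_bool (b 10) + of_bool (b 22)) (of_bool (b 2) + of_bool (b 14)) (of_bool (b 21)) (of_bool (b 13)) (of_bool (b 5)) l \<le> DF m2 m1 l"
    using pair_bound[of "(of_bool (b 18) + of_bool (b 6))" "(of_bool (b 10) + of_bool (b 22))" "(of_bool (b 2) + of_bool (b 14))" "(of_bool (b 9))" "(of_bool (b 1))" "(of_bool (b 17))" "(of_bool (b 21))" "(of_bool (b 13))" "(of_bool (b 5))" l] l9' unfolding m2_def mx2[symmetric] by simp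
  have mx3: "(of_bool (b 18)) + (of_bool (b 10)) + (of_bool (b 2)) + ((of_bool (b 6)) + (of_bool (b 22)) + (of_bool (b 14))) = m2" unfolding m2_def by simp
  have p3: "Gp (of_bool (b 3) + of_bool (b 15)) (of_bool (b 19) + of_bool (b 7)) (of_bool (b 11) + of_bool (b 23)) (of_bool (b 18)) (of_bool (b 10)) (of_bool (b 2)) l + Gp (of_bool (b 3) + of_bool (b 15)) (of_bool (b 19) + of_bool (b 7)) (of_bool (b 11) + of_bool (b 23)) (of_bool (b 6)) (of_bool (b 22)) (of_bool (b 14)) l \<le> DF m3 m2 l"
    using pair_bound[of "(of_bool (b 3) + of_bool (b 15))" "(of_bool (b 19) + of_bool (b 7))" "(of_bool (b 11) + of_bool (b 23))" "(of_bool (b 18))" "(of_bool (b 10))" "(of_bool (b 2))" "(of_bool (b 6))" "(of_bool (b 22))" "(of_bool (b 14))" l] l9' unfolding m3_def mx3[symmetric] by simp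
  have m6: "m0 \<le> 6" "m1 \<le> 6" "m2 \<le> 6" "m3 \<le> 6" unfolding m0_def m1_def m2_def m3_def by simp_all
  have "DF m0 m3 l + DF m1 m0 l + DF m2 m1 l + DF m3 m2 l \<le> 6480"
    using L3[OF m6] l9' unfolding leq by simp
  then show ?thesis
    unfolding l_def[symmetric] row_identity using p0 p1 p2 p3 by linarith
qed

lemma Rep24: "Rep_bit0 (Abs_bit0 (m mod 24) :: 24) = m mod 24"
  using bit0.Rep_Abs_mod[where 'a=12, of m] by simp
lemma Rep24_of_nat: "Rep_bit0 (of_nat a :: 24) = int a mod 24"
proof -
  have c: "int CARD(24) = 24" by simp
  show ?thesis unfolding bit0.of_nat_eq c by (rule Rep24)
qed
lemma of_nat24_eq: "(of_nat a :: 24) = of_nat c \<longleftrightarrow> a mod 24 = c mod 24"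
proof -
  have "(of_nat a :: 24) = of_nat c \<longleftrightarrow> Rep_bit0 (of_nat a :: 24) = Rep_bit0 (of_nat c :: 24)"
    using Rep_bit0_inject by blast
  also have "\<dots> \<longleftrightarrow> int a mod 24 = int c mod 24"
    unfolding Rep24_of_nat ..
  also have "\<dots> \<longleftrightarrow> int (a mod 24) = int (c mod 24)"
    by (simp only: of_nat_mod of_nat_numeral)
  also have "\<dots> \<longleftrightarrow> a mod 24 = c mod 24"
    by (rule of_nat_eq_iff)
  finally show ?thesis .
qed
lemma bij24: "bij_betw (of_nat :: nat \<Rightarrow> 24) {..<24} UNIV"
proof -
  have inj: "inj_on (of_nat :: nat \<Rightarrow> 24) {..<24}"
    by (rule inj_onI) (simp add: of_nat24_eq)
  have "card ((of_nat :: nat \<Rightarrow> 24) ` {..<24}) = 24"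
    using card_image[OF inj] by simp
  moreover have "card (UNIV :: 24 set) = 24" by simp
  moreover have "finite (UNIV :: 24 set)" by simp
  ultimately have "(of_nat :: nat \<Rightarrow> 24) ` {..<24} = UNIV"
    using card_subset_eq[of "UNIV :: 24 set" "(of_nat :: nat \<Rightarrow> 24) ` {..<24}"] by simp
  with inj show ?thesis by (simp add: bij_betw_def)
qed
lemma sum24: "(\<Sum>t\<in>(UNIV::24 set). g t) = (\<Sum>i<24. g (of_nat i))"
  using sum.reindex_bij_betw[OF bij24, of g] by simp

lemma less24: "(c::nat) < 24 \<Longrightarrow> c = 0 \<or> c = 1 \<or> c = 2 \<or> c = 3 \<or> c = 4 \<or> c = 5 \<or> c = 6 \<or> c = 7 \<or> c = 8 \<or> c = 9 \<or> c = 10 \<or> c = 11 \<or> c = 12 \<or> c = 13 \<or> c = 14 \<or> c = 15 \<or> c = 16 \<or> c = 17 \<or> c = 18 \<or> c = 19 \<or> c = 20 \<or> c = 21 \<or> c = 22 \<or> c = 23" by presburger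
lemma sq_count: "c < 24 \<Longrightarrow> (\<Sum>i<(24::nat). of_bool (i^2 mod 24 = c) :: nat) = F24 c"
  unfolding sum24_expand F24_def
  by (drule less24) (elim disjE; simp)

lemma f24_of_nat: "f24 (of_nat m) = real (F24 (m mod 24))"
proof -
  have set_eq: "{j::24. j^2 = of_nat m} = of_nat ` {i. i < 24 \<and> i^2 mod 24 = m mod 24}"
  proof (intro set_eqI iffI)
    fix j :: 24 assume "j \<in> {j. j^2 = of_nat m}"
    then have j: "j^2 = of_nat m" by simp
    obtain i where i: "i < 24" "j = of_nat i"
      using bij24 unfolding bij_betw_def by (metis UNIV_I imageE lessThan_iff)
    then have "(of_nat (i^2) :: 24) = of_nat m" unfolding of_nat_power using j by simp
    then have "i^2 mod 24 = m mod 24" unfolding of_nat24_eq .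
    with i show "j \<in> of_nat ` {i. i < 24 \<and> i^2 mod 24 = m mod 24}" by blast
  next
    fix j :: 24 assume "j \<in> of_nat ` {i. i < 24 \<and> i^2 mod 24 = m mod 24}"
    then obtain i where i: "i < 24" "i^2 mod 24 = m mod 24" "j = of_nat i" by blast
    have "(of_nat (i^2) :: 24) = of_nat m" using i(2) unfolding of_nat24_eq .
    with i show "j \<in> {j. j^2 = of_nat m}" unfolding of_nat_power by simp
  qed
  have inj: "inj_on (of_nat :: nat \<Rightarrow> 24) {i. i < 24 \<and> i^2 mod 24 = m mod 24}"
  proof -
    have "inj_on (of_nat :: nat \<Rightarrow> 24) {..<24}" using bij24 by (simp add: bij_betw_def)
    then show ?thesis by (rule inj_on_subset) auto
  qed
  have "card {j::24. j^2 = of_nat m} = card {i. i < 24 \<and> i^2 mod 24 = m mod 24}"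
    unfolding set_eq by (rule card_image[OF inj])
  also have "\<dots> = (\<Sum>i<(24::nat). of_bool (i^2 mod 24 = m mod 24) :: nat)"
  proof -
    have "{i. i < 24 \<and> i^2 mod 24 = m mod 24} = {..<24} \<inter> {i. i^2 mod 24 = m mod 24}" by auto
    then show ?thesis by simp
  qed
  also have "\<dots> = F24 (m mod 24)" by (rule sq_count) simp
  finally show ?thesis unfolding f24_def by simp
qed

definition psi :: "24 \<Rightarrow> real" where "psi t = 80 - 66 * f24 t"
definition Phi :: "(24 \<Rightarrow> real) \<Rightarrow> real" where
  "Phi x = (\<Sum>t\<in>UNIV. max (\<Sum>j\<in>UNIV. x j * psi (t - j)) 0)"

lemma of_nat24_diff: "k < 24 \<Longrightarrow> (of_nat i - of_nat k :: 24) = of_nat ((i + 24 - k) mod 24)"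
proof -
  assume k: "k < 24"
  have "(of_nat ((i + 24 - k) mod 24) :: 24) = of_nat (i + 24 - k)"
    unfolding of_nat24_eq by simp
  also have "\<dots> = of_nat i + of_nat 24 - of_nat k"
    using k by (simp add: of_nat_diff)
  also have "(of_nat 24 :: 24) = 0"
    using of_nat24_eq[of 24 0] by simp
  finally show ?thesis by simp
qed

lemma vertex:
  fixes J :: "24 set"
  assumes cJ: "card J \<le> 9"
  shows "Phi (\<lambda>j. if j \<in> J then 1 else 0) \<le> 6480"
proof -
  define b where "b k = ((of_nat k :: 24) \<in> J)" for k
  define l where "l = (\<Sum>k<24. of_bool (b k) :: nat)"
  have cardJ: "card J = l"
  proof -
    have "card J = (\<Sum>j\<in>(UNIV::24 set). of_bool (j \<in> J) :: nat)" by simp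
    also have "\<dots> = l" unfolding sum24 l_def b_def ..
    finally show ?thesis .
  qed
  have inner: "(\<Sum>j\<in>UNIV. (if j \<in> J then 1 else 0) * psi (of_nat i - j)) = 80 * real l - 66 * real (Nf b i)" for i
  proof -
    have "(\<Sum>j\<in>UNIV. (if j \<in> J then 1 else 0) * psi (of_nat i - j))
        = (\<Sum>k<24. of_bool (b k) * (80 - 66 * real (F24 ((i + 24 - k) mod 24))))"
      unfolding sum24 b_def
      by (rule sum.cong) (simp_all add: psi_def of_nat24_diff f24_of_nat)
    also have "\<dots> = 80 * (\<Sum>k<24. of_bool (b k)) - 66 * (\<Sum>k<24. of_bool (b k) * real (F24 ((i + 24 - k) mod 24)))"
      by (simp add: sum_subtractf sum_distrib_left algebra_simps)
    also have "\<dots> = 80 * real l - 66 * real (Nf b i)"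
      unfolding l_def Nf_def by simp
    finally show ?thesis .
  qed
  have "Phi (\<lambda>j. if j \<in> J then 1 else 0) = (\<Sum>i<24. max (\<Sum>j\<in>UNIV. (if j \<in> J then 1 else 0) * psi (of_nat i - j)) 0)"
    unfolding Phi_def by (rule sum24)
  also have "\<dots> = (\<Sum>i<24. max (80 * real l - 66 * real (Nf b i)) 0)"
    by (simp only: inner)
  also have "\<dots> = real_of_int (\<Sum>i<24. max (80 * int l - 66 * int (Nf b i)) 0)"
    by (simp add: of_int_max)
  also have "\<dots> \<le> 6480"
  proof -
    have "(\<Sum>i<24. max (80 * int l - 66 * int (Nf b i)) 0) \<le> 6480"
      using vertex_nat[of b] cJ unfolding cardJ l_def[symmetric] by simp
    then have "real_of_int (\<Sum>i<24. max (80 * int l - 66 * int (Nf b i)) 0) \<le> real_of_int 6480"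
      by (rule of_int_le_iff[THEN iffD2])
    then show ?thesis by (simp only: of_int_numeral)
  qed
  finally show ?thesis .
qed

lemma max_convex:
  fixes u A B :: real
  assumes "0 \<le> u" "u \<le> 1"
  shows "max (u* A + (1-u)* B) 0 \<le> u * max A 0 + (1-u) * max B 0"
proof -
  have "u* A \<le> u * max A 0" using assms by (intro mult_left_mono) auto
  moreover have "(1-u)* B \<le> (1-u) * max B 0" using assms by (intro mult_left_mono) auto
  moreover have "0 \<le> u * max A 0" "0 \<le> (1-u) * max B 0" using assms by auto
  ultimately show ?thesis by linarith
qed

lemma Phi_convex:
  assumes "0 \<le> u" "u \<le> 1"
  shows "Phi (\<lambda>j. u * x j + (1-u) * y j) \<le> u * Phi x + (1-u) * Phi y"
proof -
  have inner: "(\<Sum>j\<in>UNIV. (u * x j + (1-u) * y j) * psi (t - j))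
     = u * (\<Sum>j\<in>UNIV. x j * psi (t - j)) + (1-u) * (\<Sum>j\<in>UNIV. y j * psi (t - j))" for t
  proof -
    have "(\<Sum>j\<in>UNIV. (u * x j + (1-u) * y j) * psi (t - j))
       = (\<Sum>j\<in>UNIV. u * (x j * psi (t - j)) + (1-u) * (y j * psi (t - j)))"
      by (rule sum.cong) (simp_all add: algebra_simps)
    also have "\<dots> = u * (\<Sum>j\<in>UNIV. x j * psi (t - j)) + (1-u) * (\<Sum>j\<in>UNIV. y j * psi (t - j))"
      by (simp only: sum.distrib sum_distrib_left)
    finally show ?thesis .
  qed
  have "Phi (\<lambda>j. u * x j + (1-u) * y j) \<le> (\<Sum>t\<in>UNIV. u * max (\<Sum>j\<in>UNIV. x j * psi (t - j)) 0 + (1-u) * max (\<Sum>j\<in>UNIV. y j * psi (t - j)) 0)"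
    unfolding Phi_def inner by (rule sum_mono) (rule max_convex[OF assms])
  also have "\<dots> = u * Phi x + (1-u) * Phi y"
    unfolding Phi_def by (simp add: sum.distrib sum_distrib_left)
  finally show ?thesis .
qed

lemma Phi_scale:
  assumes "0 \<le> c"
  shows "Phi (\<lambda>j. c * x j) = c * Phi x"
proof -
  have m: "max (c * A) 0 = c * max A 0" for A :: real
    using assms by (cases "0 \<le> A") (auto simp: max_def mult_le_0_iff)
  have "Phi (\<lambda>j. c * x j) = (\<Sum>t\<in>UNIV. max (c * (\<Sum>j\<in>UNIV. x j * psi (t - j))) 0)"
    unfolding Phi_def by (simp add: sum_distrib_left mult.assoc)
  also have "\<dots> = c * Phi x"
    unfolding Phi_def m by (simp add: sum_distrib_left)
  finally show ?thesis .
qed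

lemma rounding_aux:
  "card {j. 0 < x j \<and> x j < 1} = n \<Longrightarrow> (\<forall>j. 0 \<le> x j \<and> x j \<le> 1) \<Longrightarrow> sum x UNIV \<le> 9 \<Longrightarrow> Phi x \<le> 6480"
proof (induction n arbitrary: x rule: less_induct)
  case (less n x)
  note bnd = less.prems(2)
  note sm = less.prems(3)
  define Fr where "Fr y = {j::24. 0 < y j \<and> y j < 1}" for y :: "24 \<Rightarrow> real"
  have cardFr: "card (Fr x) = n" using less.prems(1) unfolding Fr_def .
  have IH: "Phi y \<le> 6480" if "card (Fr y) < card (Fr x)" "\<forall>j. 0 \<le> y j \<and> y j \<le> 1" "sum y UNIV \<le> 9" for y
    using less.IH[of "card (Fr y)" y] that cardFr unfolding Fr_def by simp
  show ?case
  proof (cases "Fr x = {}")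
    case True
    have x01: "x j = 0 \<or> x j = 1" for j
    proof -
      have "\<not> (0 < x j \<and> x j < 1)" using True unfolding Fr_def by blast
      then show ?thesis using bnd[rule_format, of j] by auto
    qed
    define J where "J = {j. x j = 1}"
    have xJ: "x = (\<lambda>j. if j \<in> J then 1 else 0)" using x01 by (auto simp: J_def fun_eq_iff)
    have "sum x UNIV = real (card J)"
    proof -
      have "sum x UNIV = (\<Sum>j\<in>UNIV. of_bool (j \<in> J) :: real)" by (subst xJ) (simp add: of_bool_def)
      also have "\<dots> = real (card J)" by simp
      finally show ?thesis .
    qed
    then have "card J \<le> 9" using sm by linarith
    then show ?thesis using vertex xJ by simp
  next
    case False
    then obtain i where i: "0 < x i" "x i < 1" unfolding Fr_def by auto
    have fin: "finite (Fr y)" for y by simp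
    show ?thesis
    proof (cases "\<exists>i'. i' \<noteq> i \<and> 0 < x i' \<and> x i' < 1")
      case True
      then obtain i' where i': "i' \<noteq> i" "0 < x i'" "x i' < 1" by auto
      define tp where "tp = min (1 - x i) (x i')"
      define tm where "tm = min (x i) (1 - x i')"
      define d where "d j = (if j = i then 1 else 0) - (if j = i' then 1 else (0::real))" for j
      define xp where "xp j = x j + tp * d j" for j
      define xm where "xm j = x j - tm * d j" for j
      have tp: "0 < tp" using i i' unfolding tp_def by simp
      have tm: "0 < tm" using i i' unfolding tm_def by simp
      have sd: "sum d UNIV = 0" unfolding d_def by (simp add: sum_subtractf)
      have sxp: "sum xp UNIV = sum x UNIV" unfolding xp_def by (simp add: sum.distrib sum_distrib_left[symmetric] sd)
      have sxm: "sum xm UNIV = sum x UNIV" unfolding xm_def by (simp add: sum_subtractf sum_distrib_left[symmetric] sd)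
      have bp: "\<forall>j. 0 \<le> xp j \<and> xp j \<le> 1"
      proof
        fix j show "0 \<le> xp j \<and> xp j \<le> 1"
          using bnd[rule_format, of j] i i' unfolding xp_def d_def tp_def by (auto simp: min_def)
      qed
      have bm: "\<forall>j. 0 \<le> xm j \<and> xm j \<le> 1"
      proof
        fix j show "0 \<le> xm j \<and> xm j \<le> 1"
          using bnd[rule_format, of j] i i' unfolding xm_def d_def tm_def by (auto simp: min_def)
      qed
      have ix: "i \<in> Fr x" "i' \<in> Fr x" using i i' unfolding Fr_def by auto
      have "Fr xp \<subseteq> Fr x" unfolding Fr_def xp_def d_def using i i' by auto
      moreover have "i \<notin> Fr xp \<or> i' \<notin> Fr xp" unfolding Fr_def xp_def d_def tp_def using i' by (auto simp: min_def)
      ultimately have "Fr xp \<subset> Fr x" using ix by blast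
      then have cp: "card (Fr xp) < card (Fr x)" by (rule psubset_card_mono[OF fin])
      have "Fr xm \<subseteq> Fr x" unfolding Fr_def xm_def d_def using i i' by auto
      moreover have "i \<notin> Fr xm \<or> i' \<notin> Fr xm" unfolding Fr_def xm_def d_def tm_def using i' by (auto simp: min_def)
      ultimately have "Fr xm \<subset> Fr x" using ix by blast
      then have cm: "card (Fr xm) < card (Fr x)" by (rule psubset_card_mono[OF fin])
      have Pp: "Phi xp \<le> 6480" using IH[OF cp bp] sxp sm by simp
      have Pm: "Phi xm \<le> 6480" using IH[OF cm bm] sxm sm by simp
      define u where "u = tm / (tp + tm)"
      have u: "0 \<le> u" "u \<le> 1" using tp tm unfolding u_def by auto
      have xeq: "x = (\<lambda>j. u * xp j + (1-u) * xm j)"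
      proof
        fix j
        have "u * xp j + (1-u) * xm j = x j + (u * tp - (1 - u) * tm) * d j"
          unfolding xp_def xm_def by (simp add: algebra_simps)
        also have "u * tp - (1 - u) * tm = 0"
          using tp tm unfolding u_def by (simp add: field_simps)
        finally show "x j = u * xp j + (1-u) * xm j" by simp
      qed
      have "Phi x \<le> u * Phi xp + (1-u) * Phi xm"
        by (subst xeq) (rule Phi_convex[OF u])
      also have "\<dots> \<le> u * 6480 + (1-u) * 6480"
        using Pp Pm u by (intro add_mono mult_left_mono) auto
      finally show ?thesis by simp
    next
      case False
      have oth: "x j = 0 \<or> x j = 1" if "j \<noteq> i" for j
      proof -
        have "\<not> (0 < x j \<and> x j < 1)" using False that by blast
        then show ?thesis using bnd[rule_format, of j] by auto
      qed
      define xp where "xp = x(i := 1)"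
      define xm where "xm = x(i := 0)"
      have bp: "\<forall>j. 0 \<le> xp j \<and> xp j \<le> 1" using bnd unfolding xp_def by auto
      have bm: "\<forall>j. 0 \<le> xm j \<and> xm j \<le> 1" using bnd unfolding xm_def by auto
      have ix: "i \<in> Fr x" using i unfolding Fr_def by auto
      have "Fr xp \<subseteq> Fr x - {i}" unfolding Fr_def xp_def by auto
      then have "Fr xp \<subset> Fr x" using ix by blast
      then have cp: "card (Fr xp) < card (Fr x)" by (rule psubset_card_mono[OF fin])
      have "Fr xm \<subseteq> Fr x - {i}" unfolding Fr_def xm_def by auto
      then have "Fr xm \<subset> Fr x" using ix by blast
      then have cm: "card (Fr xm) < card (Fr x)" by (rule psubset_card_mono[OF fin])
      define s where "s = sum x (UNIV - {i})"
      have sx: "sum x UNIV = x i + s" unfolding s_def by (rule sum.remove) auto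
      have sxp: "sum xp UNIV = 1 + s"
      proof -
        have "sum xp UNIV = xp i + sum xp (UNIV - {i})" by (rule sum.remove) auto
        also have "sum xp (UNIV - {i}) = s" unfolding s_def xp_def by (rule sum.cong) auto
        finally show ?thesis unfolding xp_def by simp
      qed
      have sxm: "sum xm UNIV = s"
      proof -
        have "sum xm UNIV = xm i + sum xm (UNIV - {i})" by (rule sum.remove) auto
        also have "sum xm (UNIV - {i}) = s" unfolding s_def xm_def by (rule sum.cong) auto
        finally show ?thesis unfolding xm_def by simp
      qed
      have "s = (\<Sum>j\<in>UNIV - {i}. of_bool (x j = 1))"
        unfolding s_def by (rule sum.cong) (use oth in auto)
      also have "\<dots> = real (card ((UNIV - {i}) \<inter> {j. x j = 1}))" by simp
      finally have s_nat: "s = real (card ((UNIV - {i}) \<inter> {j. x j = 1}))" .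
      have "s < 9" using sx sm i by linarith
      then have "card ((UNIV - {i}) \<inter> {j. x j = 1}) < 9" using s_nat by linarith
      then have "s \<le> 8" using s_nat by linarith
      have Pp: "Phi xp \<le> 6480" using IH[OF cp bp] sxp \<open>s \<le> 8\<close> by simp
      have Pm: "Phi xm \<le> 6480" using IH[OF cm bm] sxm \<open>s < 9\<close> by simp
      define u where "u = x i"
      have u: "0 \<le> u" "u \<le> 1" using i unfolding u_def by auto
      have xeq: "x = (\<lambda>j. u * xp j + (1-u) * xm j)"
        unfolding xp_def xm_def u_def by (auto simp: fun_eq_iff algebra_simps)
      have "Phi x \<le> u * Phi xp + (1-u) * Phi xm"
        by (subst xeq) (rule Phi_convex[OF u])
      also have "\<dots> \<le> u * 6480 + (1-u) * 6480"
        using Pp Pm u by (intro add_mono mult_left_mono) auto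
      finally show ?thesis by simp
    qed
  qed
qed

lemma rounding: "(\<forall>j. 0 \<le> x j \<and> x j \<le> 1) \<Longrightarrow> sum x UNIV \<le> 9 \<Longrightarrow> Phi x \<le> 6480"
  using rounding_aux by blast


lemma l1_nonneg: "(\<forall>j. 0 \<le> a j) \<Longrightarrow> l1_norm24 a = sum a UNIV"
  unfolding l1_norm24_def by simp

lemma sup_ge: "\<bar>a j\<bar> \<le> sup_norm24 a"
  unfolding sup_norm24_def by (rule Max_ge) auto

lemma NN_ge_sup: "9 * \<bar>a j\<bar> \<le> NN a"
  using sup_ge[of a j] unfolding NN_def by linarith

lemma NN_ge_l1: "l1_norm24 a \<le> NN a"
  unfolding NN_def by simp

lemma Phi_le:
  assumes a: "\<forall>j. 0 \<le> a j"
  shows "Phi a \<le> 720 * NN a"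
proof -
  have L: "sum a UNIV \<le> NN a" using NN_ge_l1[of a] l1_nonneg[OF a] by simp
  have M: "9 * a j \<le> NN a" for j using NN_ge_sup[of a j] a by simp
  have N0: "0 \<le> NN a" using M[of 0] a by (metis mult_nonneg_nonneg order.trans zero_le_numeral)
  show ?thesis
  proof (cases "NN a = 0")
    case True
    then have "a j = 0" for j using M[of j] a by (metis antisym mult_le_0_iff zero_less_numeral not_less)
    then have "a = (\<lambda>j. 0 * a j)" by auto
    then have "Phi a = 0" using Phi_scale[of 0 a] by simp
    then show ?thesis using True by simp
  next
    case False
    then have Np: "0 < NN a" using N0 by simp
    define x where "x j = (9 / NN a) * a j" for j
    have "\<forall>j. 0 \<le> x j \<and> x j \<le> 1"
      using M a Np unfolding x_def by (auto simp: field_simps)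
    moreover have "sum x UNIV \<le> 9"
    proof -
      have "sum x UNIV = (9 / NN a) * sum a UNIV" unfolding x_def by (simp add: sum_distrib_left)
      also have "\<dots> \<le> (9 / NN a) * NN a" using L Np by (intro mult_left_mono) auto
      also have "\<dots> = 9" using Np by simp
      finally show ?thesis .
    qed
    ultimately have Px: "Phi x \<le> 6480" by (rule rounding)
    have "a = (\<lambda>j. (NN a / 9) * x j)" using Np unfolding x_def by (auto simp: fun_eq_iff)
    then have "Phi a = (NN a / 9) * Phi x" using Phi_scale[of "NN a / 9" x] Np by simp
    also have "\<dots> \<le> (NN a / 9) * 6480" using Px Np by (intro mult_left_mono) auto
    finally show ?thesis by simp
  qed
qed

lemma sqrt5: "22/5 \<le> 2 * sqrt (5::real)"
proof -
  have "11/5 \<le> sqrt (5::real)" by (rule real_le_rsqrt) (simp add: power2_eq_square)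
  then show ?thesis by simp
qed

lemma f24_nonneg: "0 \<le> f24 t" unfolding f24_def by simp

lemma phi_le_psi: "phi24 s \<le> psi s / 15"
proof -
  have "(22/5) * f24 s \<le> 2 * sqrt 5 * f24 s" using sqrt5 f24_nonneg[of s] by (intro mult_right_mono) auto
  then show ?thesis unfolding phi24_def psi_def by simp
qed

lemma phi_le: "phi24 s \<le> 16/3"
  unfolding phi24_def using f24_nonneg[of s] by simp

lemma main_phi:
  assumes a: "\<And>t. a t \<ge> 0"
  shows "NN (pospart (conv24 a phi24)) \<le> 2 * NN a"
proof -
  have c1: "conv24 a phi24 t \<le> (1/360) * (\<Sum>j\<in>UNIV. a j * psi (t - j))" for t
  proof -
    have "(\<Sum>j\<in>UNIV. a j * phi24 (t - j)) \<le> (\<Sum>j\<in>UNIV. a j * (psi (t - j) / 15))"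
      by (rule sum_mono) (rule mult_left_mono[OF phi_le_psi a])
    then show ?thesis unfolding conv24_def by (simp add: sum_divide_distrib[symmetric])
  qed
  have c2: "conv24 a phi24 t \<le> (2/9) * sum a UNIV" for t
  proof -
    have "(\<Sum>j\<in>UNIV. a j * phi24 (t - j)) \<le> (\<Sum>j\<in>UNIV. a j * (16/3))"
      by (rule sum_mono) (rule mult_left_mono[OF phi_le a])
    moreover have "(\<Sum>j\<in>UNIV. a j * (16/3)) = sum a UNIV * (16/3)" by (rule sum_distrib_right[symmetric])
    ultimately have "(\<Sum>j\<in>UNIV. a j * phi24 (t - j)) \<le> sum a UNIV * (16/3)" by linarith
    then show ?thesis unfolding conv24_def by simp
  qed
  have sa: "0 \<le> sum a UNIV" using a by (simp add: sum_nonneg)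
  have L: "sum a UNIV \<le> NN a" using NN_ge_l1[of a] l1_nonneg[of a] a by simp
  have l1: "l1_norm24 (pospart (conv24 a phi24)) \<le> 2 * NN a"
  proof -
    have "l1_norm24 (pospart (conv24 a phi24)) = (\<Sum>t\<in>UNIV. max (conv24 a phi24 t) 0)"
      unfolding l1_norm24_def pospart_def by simp
    also have "\<dots> \<le> (\<Sum>t\<in>UNIV. (1/360) * max (\<Sum>j\<in>UNIV. a j * psi (t - j)) 0)"
    proof (rule sum_mono)
      fix t :: 24
      let ?S = "\<Sum>j\<in>UNIV. a j * psi (t - j)"
      have "?S \<le> max ?S 0" by simp
      then have "(1/360) * ?S \<le> (1/360) * max ?S 0" by simp
      then have "conv24 a phi24 t \<le> (1/360) * max ?S 0" using c1[of t] by linarith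
      moreover have "0 \<le> (1/360) * max ?S 0" by simp
      ultimately show "max (conv24 a phi24 t) 0 \<le> (1/360) * max ?S 0" by simp
    qed
    also have "\<dots> = (1/360) * Phi a" unfolding Phi_def by (simp add: sum_distrib_left)
    also have "\<dots> \<le> (1/360) * (720 * NN a)" using Phi_le[of a] a by simp
    finally show ?thesis by simp
  qed
  have sup: "9 * sup_norm24 (pospart (conv24 a phi24)) \<le> 2 * NN a"
  proof -
    have "sup_norm24 (pospart (conv24 a phi24)) \<le> (2/9) * sum a UNIV"
      unfolding sup_norm24_def
    proof (rule Max.boundedI)
      show "finite (range (\<lambda>t. \<bar>pospart (conv24 a phi24) t\<bar>))" by simp
      show "range (\<lambda>t. \<bar>pospart (conv24 a phi24) t\<bar>) \<noteq> {}" by simp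
      fix y assume "y \<in> range (\<lambda>t. \<bar>pospart (conv24 a phi24) t\<bar>)"
      then obtain t where y: "y = \<bar>pospart (conv24 a phi24) t\<bar>" by auto
      have "y = max (conv24 a phi24 t) 0" unfolding y pospart_def by simp
      moreover have "conv24 a phi24 t \<le> (2/9) * sum a UNIV" by (rule c2)
      moreover have "0 \<le> (2/9) * sum a UNIV" using sa by simp
      ultimately show "y \<le> (2/9) * sum a UNIV" by simp
    qed
    then show ?thesis using L by linarith
  qed
  show ?thesis using l1 sup unfolding NN_def[of "pospart (conv24 a phi24)"] by simp
qed


lemma sum_neg24: "(\<Sum>t\<in>(UNIV::24 set). g (- t)) = (\<Sum>t\<in>UNIV. g t)"
  by (rule sum.reindex_bij_witness[of _ uminus uminus]) auto

lemma NN_neg: "NN (\<lambda>t. h (- t)) = NN h"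
proof -
  have "range uminus = (UNIV :: 24 set)" by (metis surj_def minus_minus)
  then have r: "range (\<lambda>t. \<bar>h (- t)\<bar>) = range (\<lambda>t. \<bar>h t\<bar>)"
    by (metis image_image)
  have "l1_norm24 (\<lambda>t. h (- t)) = l1_norm24 h"
    unfolding l1_norm24_def by (rule sum_neg24)
  then show ?thesis unfolding NN_def sup_norm24_def r by simp
qed

lemma conv_tilde: "conv24 a phi24_tilde t = conv24 (\<lambda>j. a (- j)) phi24 (- t)"
proof -
  have "(\<Sum>j\<in>UNIV. a (- j) * phi24 (- t - j)) = (\<Sum>j\<in>UNIV. a (- (- j)) * phi24 (- t - (- j)))"
    by (rule sum_neg24[symmetric])
  also have "\<dots> = (\<Sum>j\<in>UNIV. a j * phi24_tilde (t - j))"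
    unfolding phi24_tilde_def by (simp add: algebra_simps)
  finally show ?thesis unfolding conv24_def by simp
qed

theorem mainTheorem16:
  fixes a :: "24 \<Rightarrow> real"
  assumes "\<And>t. a t \<ge> 0"
  shows "NN (pospart (conv24 a phi24)) \<le> 2 * NN a \<and>
         NN (pospart (conv24 a phi24_tilde)) \<le> 2 * NN a"
proof
  show "NN (pospart (conv24 a phi24)) \<le> 2 * NN a" by (rule main_phi[OF assms])
next
  have eq: "pospart (conv24 a phi24_tilde) = (\<lambda>t. pospart (conv24 (\<lambda>j. a (- j)) phi24) (- t))"
    by (simp add: fun_eq_iff pospart_def conv_tilde)
  have "NN (pospart (conv24 (\<lambda>j. a (- j)) phi24)) \<le> 2 * NN (\<lambda>j. a (- j))"
    by (rule main_phi) (use assms in auto)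
  then show "NN (pospart (conv24 a phi24_tilde)) \<le> 2 * NN a"
    unfolding eq NN_neg NN_neg[of a] .
qed


end
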